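(* For every $\omega>0$, $$\|\mathcal F_\omega^{-1}\mathcal R\|_2<\frac{2\sqrt{\omega^2+\nu^2}}{\omega},$$ where $\nu$ is the largest diagonal entry of $D$.
   Context: Let $M\ge 1$ be an integer and let $I$ denote an identity matrix of the appropriate size. Let $T\in\mathbb R^{M\times M}$ be real symmetric positive definite. Let $D=\operatorname{diag}(d_1,\dots,d_M)$ with $d_j\ge0$, and $\nu=\max_j d_j$. Define the block matrices in $\mathbb R^{2M\times 2M}$: $$\mathcal R=\begin{bmatrix} I & T-D\\ D-T & I\end{bmatrix},\qquad \mathcal T=\begin{bmatrix} I & T\\ -T & I\end{bmatrix},\qquad \mathcal D=\begin{bmatrix} 0 & -D\\ D & 0\end{bmatrix}.$$ Thus $\mathcal R=\mathcal T+\mathcal D$. For $\omega>0$, the NASS preconditioner is $$\mathcal F_\omega=\tfrac{1}{2\omega}(\omega I+\mathcal T)(\omega I+\mathcal D).$$ *)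

theory Defs
  imports "HOL-Analysis.Analysis"
begin

definition block2 :: "real^'m^'m \<Rightarrow> real^'m^'m \<Rightarrow> real^'m^'m \<Rightarrow> real^'m^'m
    \<Rightarrow> real^('m::finite + 'm)^('m + 'm)" where
  "block2 A B C E = (\<chi> i j. (case i of
       Inl i' \<Rightarrow> (case j of Inl j' \<Rightarrow> A$i'$j' | Inr j' \<Rightarrow> B$i'$j')
     | Inr i' \<Rightarrow> (case j of Inl j' \<Rightarrow> C$i'$j' | Inr j' \<Rightarrow> E$i'$j')))"

definition diagm :: "real^'m \<Rightarrow> real^'m^'m" where
  "diagm d = (\<chi> i j. if i = j then d$i else 0)"

definition norm2 :: "real^'n^'m \<Rightarrow> real" where
  "norm2 A = onorm (\<lambda>x. A *v x)"

definition calR :: "real^'m^'m \<Rightarrow> real^'m \<Rightarrow> real^('m::finite + 'm)^('m + 'm)" where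
  "calR T d = block2 (mat 1) (T - diagm d) (diagm d - T) (mat 1)"

definition calT :: "real^'m^'m \<Rightarrow> real^('m::finite + 'm)^('m + 'm)" where
  "calT T = block2 (mat 1) T (- T) (mat 1)"

definition calD :: "real^'m \<Rightarrow> real^('m::finite + 'm)^('m + 'm)" where
  "calD d = block2 0 (- diagm d) (diagm d) 0"

definition NASS :: "real \<Rightarrow> real^'m^'m \<Rightarrow> real^'m \<Rightarrow> real^('m::finite + 'm)^('m + 'm)" where
  "NASS \<omega> T d = (1 / (2 * \<omega>)) *\<^sub>R ((\<omega> *\<^sub>R mat 1 + calT T) ** (\<omega> *\<^sub>R mat 1 + calD d))"

end

theory Submission imports Defs begin

lemma sumU: "(\<Sum>k\<in>(UNIV::('m::finite+'m) set). g k) = (\<Sum>i\<in>UNIV. g (Inl i)) + (\<Sum>i\<in>UNIV. g (Inr i))"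
  using sum.Plus[of "UNIV::'m set" "UNIV::'m set" g] by (simp add: comp_def)

definition skewT :: "real^'m^'m \<Rightarrow> real^('m::finite + 'm)^('m + 'm)" where
  "skewT T = block2 0 T (- T) 0"

lemma calT_eq: "calT T = mat 1 + skewT T"
  by (simp add: vec_eq_iff calT_def skewT_def block2_def mat_def split: sum.split)

lemma calR_eq: "calR T d = calT T + calD d"
  by (simp add: vec_eq_iff calR_def calT_def calD_def block2_def mat_def diagm_def split: sum.split)

lemma skewT_tr: "transpose T = T \<Longrightarrow> transpose (skewT T) = - skewT T"
  by (simp add: vec_eq_iff skewT_def block2_def transpose_def split: sum.split)

lemma calD_tr: "transpose (calD d) = - calD d"
  by (simp add: vec_eq_iff calD_def block2_def transpose_def diagm_def split: sum.split) 

lemma ifmul: "(if c then (a::real) else 0) * b = (if c then a * b else 0)" by simp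

lemma calD_comp: "(calD d *v x) $ k = (case k of Inl i \<Rightarrow> - d$i * x$Inr i | Inr i \<Rightarrow> d$i * x$Inl i)"
  by (auto simp add: matrix_vector_mult_def sumU calD_def block2_def diagm_def ifmul sum.delta sum_negf split: sum.split)

lemma skew_inner:
  fixes S :: "real^'n::finite^'n"
  assumes "transpose S = - S" shows "x \<bullet> (S *v x) = 0"
proof -
  have "x \<bullet> (S *v x) = (x v* S) \<bullet> x" by (rule dot_lmul_matrix[symmetric])
  also have "x v* S = transpose S *v x" by simp
  also have "\<dots> = - (S *v x)" using assms by (simp add: matrix_vector_mult_def vec_eq_iff sum_negf)
  finally show ?thesis by (simp add: inner_commute)
qed

lemma scal_mv: "(c *\<^sub>R mat 1) *v x = c *\<^sub>R (x::real^'n::finite)"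
  by (metis scaleR_matrix_vector_assoc matrix_vector_mul_lid)

lemma norm_sq_shift:
  fixes S :: "real^'n::finite^'n"
  assumes "transpose S = - S"
  shows "(norm ((c *\<^sub>R mat 1 + S) *v x))^2 = c^2 * (norm x)^2 + (norm (S *v x))^2"
proof -
  have e: "(c *\<^sub>R mat 1 + S) *v x = c *\<^sub>R x + S *v x" by (simp add: matrix_vector_mult_add_rdistrib scal_mv)
  have z: "x \<bullet> (S *v x) = 0" by (rule skew_inner[OF assms])
  show ?thesis unfolding e power2_norm_eq_inner
    using z by (simp add: inner_add_left inner_add_right inner_commute power2_eq_square)
qed

lemma norm_sq_shift_m:
  fixes S :: "real^'n::finite^'n"
  assumes "transpose S = - S"
  shows "(norm ((c *\<^sub>R mat 1 - S) *v x))^2 = c^2 * (norm x)^2 + (norm (S *v x))^2"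
proof -
  have e: "(c *\<^sub>R mat 1 - S) *v x = c *\<^sub>R x - S *v x" by (simp add: matrix_vector_mult_diff_rdistrib scal_mv)
  have z: "x \<bullet> (S *v x) = 0" by (rule skew_inner[OF assms])
  show ?thesis unfolding e power2_norm_eq_inner
    using z by (simp add: inner_diff_left inner_diff_right inner_commute power2_eq_square)
qed

lemma calD_norm:
  assumes "\<And>j. d$j \<ge> 0"
  shows "norm (calD d *v x) \<le> Max (range (\<lambda>j. d$j)) * norm x"
proof -
  define \<nu> where "\<nu> = Max (range (\<lambda>j. d$j))"
  have dle: "d$j \<le> \<nu>" for j unfolding \<nu>_def by (rule Max_ge) auto
  have d2: "(d$j)^2 \<le> \<nu>^2" for j using dle[of j] assms[of j] by (simp add: power_mono)
  have nn: "\<nu> \<ge> 0" using dle assms order_trans by blast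
  have "(norm (calD d *v x))^2 = (\<Sum>i\<in>UNIV. (d$i)^2 * (x$Inr i)^2) + (\<Sum>i\<in>UNIV. (d$i)^2 * (x$Inl i)^2)"
    unfolding power2_norm_eq_inner inner_vec_def sumU by (simp add: calD_comp power2_eq_square mult_ac)
  also have "\<dots> \<le> (\<Sum>i\<in>UNIV. \<nu>^2 * (x$Inr i)^2) + (\<Sum>i\<in>UNIV. \<nu>^2 * (x$Inl i)^2)"
    by (intro add_mono sum_mono mult_right_mono d2) auto
  also have "\<dots> = \<nu>^2 * (norm x)^2"
    unfolding power2_norm_eq_inner inner_vec_def sumU by (simp add: sum_distrib_left[symmetric] power2_eq_square distrib_left)
  finally have "(norm (calD d *v x))^2 \<le> (\<nu> * norm x)^2" by (simp add: power_mult_distrib)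
  then have "norm (calD d *v x) \<le> \<nu> * norm x" using nn by (meson power2_le_imp_le mult_nonneg_nonneg norm_ge_zero)
  then show ?thesis unfolding \<nu>_def .
qed

theorem mainTheorem8:
  fixes T :: "real^'m::finite^'m" and d :: "real^'m" and \<omega> :: real
  assumes symT: "transpose T = T"
    and posdefT: "\<And>x. x \<noteq> 0 \<Longrightarrow> x \<bullet> (T *v x) > 0"
    and dnonneg: "\<And>j. d$j \<ge> 0"
    and \<omega>pos: "\<omega> > 0"
  shows "norm2 (matrix_inv (NASS \<omega> T d) ** calR T d)
           < 2 * sqrt (\<omega>^2 + (Max (range (\<lambda>j. d$j)))^2) / \<omega>"
proof -
  define \<nu> where "\<nu> = Max (range (\<lambda>j. d$j))"
  define s where "s = sqrt (\<omega>^2 + \<nu>^2)"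
  define S where "S = skewT T"
  define Dm where "Dm = calD d"
  define A where "A = \<omega> *\<^sub>R mat 1 + calT T"
  define B where "B = \<omega> *\<^sub>R mat 1 - calT T"
  define C where "C = \<omega> *\<^sub>R mat 1 + Dm"
  define E where "E = \<omega> *\<^sub>R mat 1 - Dm"
  define F where "F = NASS \<omega> T d"
  have Str: "transpose S = - S" unfolding S_def using skewT_tr[OF symT] .
  have Dtr: "transpose Dm = - Dm" unfolding Dm_def by (rule calD_tr)
  have A': "A = (\<omega>+1) *\<^sub>R mat 1 + S" unfolding A_def S_def calT_eq by (simp add: algebra_simps)
  have B': "B = (\<omega>-1) *\<^sub>R mat 1 - S" unfolding B_def S_def calT_eq by (simp add: algebra_simps)
  have nA: "(norm (A *v z))^2 = (\<omega>+1)^2 * (norm z)^2 + (norm (S *v z))^2" for z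
    unfolding A' by (rule norm_sq_shift[OF Str])
  have nB: "(norm (B *v z))^2 = (\<omega>-1)^2 * (norm z)^2 + (norm (S *v z))^2" for z
    unfolding B' by (rule norm_sq_shift_m[OF Str])
  have nC: "(norm (C *v z))^2 = \<omega>^2 * (norm z)^2 + (norm (Dm *v z))^2" for z
    unfolding C_def by (rule norm_sq_shift[OF Dtr])
  have nE: "(norm (E *v z))^2 = \<omega>^2 * (norm z)^2 + (norm (Dm *v z))^2" for z
    unfolding E_def by (rule norm_sq_shift_m[OF Dtr])
  have Db: "norm (Dm *v z) \<le> \<nu> * norm z" for z
    unfolding Dm_def \<nu>_def using calD_norm[OF dnonneg] .
  have \<nu>nn: "\<nu> \<ge> 0" unfolding \<nu>_def using dnonneg[of undefined] by (meson Max_ge finite rangeI order_trans finite_imageI)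
  have spos: "s \<ge> \<omega>" unfolding s_def using \<omega>pos by (simp add: real_le_rsqrt)
  have Alow: "(\<omega>+1) * norm z \<le> norm (A *v z)" for z
  proof -
    have "((\<omega>+1) * norm z)^2 \<le> (norm (A *v z))^2" unfolding nA by (simp add: power_mult_distrib)
    then show ?thesis by (rule power2_le_imp_le) simp
  qed
  have Clow: "\<omega> * norm z \<le> norm (C *v z)" for z
  proof -
    have "(\<omega> * norm z)^2 \<le> (norm (C *v z))^2" unfolding nC by (simp add: power_mult_distrib)
    then show ?thesis by (rule power2_le_imp_le) simp
  qed
  have Eup: "norm (E *v z) \<le> s * norm z" for z
  proof -
    have "(norm (Dm *v z))^2 \<le> (\<nu> * norm z)^2" using Db[of z] by (simp add: power_mono)
    then have "(norm (E *v z))^2 \<le> (s * norm z)^2" unfolding nE s_def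
      by (simp add: power_mult_distrib algebra_simps)
    then show ?thesis by (rule power2_le_imp_le) (simp add: s_def)
  qed
  have Ainj: "z = 0" if "A *v z = 0" for z
  proof -
    have "(\<omega>+1) * norm z \<le> 0" using Alow[of z] that by simp
    then show "z = 0" using \<omega>pos by (simp add: mult_le_0_iff)
  qed
  have Cinj: "z = 0" if "C *v z = 0" for z
  proof -
    have "\<omega> * norm z \<le> 0" using Clow[of z] that by simp
    then show "z = 0" using \<omega>pos by (simp add: mult_le_0_iff)
  qed
  have injA: "inj ((*v) A)"
    unfolding inj_on_def
  proof (intro ballI impI)
    fix a b assume "A *v a = A *v b"
    then have "A *v (a - b) = 0" by (simp add: matrix_vector_mult_diff_distrib)
    then show "a = b" using Ainj[of "a - b"] by simp
  qed
  have "\<exists>B. B ** A = mat 1" using injA matrix_left_invertible_injective by blast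
  then have "invertible A" using invertible_left_inverse by blast
  then obtain Ai where Ai: "A ** Ai = mat 1" unfolding invertible_def by blast
  have Fv: "F *v w = (1/(2*\<omega>)) *\<^sub>R (A *v (C *v w))" for w
    unfolding F_def NASS_def A_def C_def Dm_def
    by (simp add: matrix_vector_mul_assoc scaleR_matrix_vector_assoc)
  have injF: "inj ((*v) F)"
    unfolding inj_on_def
  proof (intro ballI impI)
    fix a b assume "F *v a = F *v b"
    then have "F *v (a - b) = 0" by (simp add: matrix_vector_mult_diff_distrib)
    then have "A *v (C *v (a - b)) = 0" using Fv[of "a - b"] \<omega>pos by simp
    then show "a = b" using Ainj[of "C *v (a - b)"] Cinj[of "a - b"] by simp
  qed
  have "\<exists>B. B ** F = mat 1" using injF matrix_left_invertible_injective by blast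
  then have invF: "invertible F" using invertible_left_inverse by blast
  have Finv: "F ** matrix_inv F = mat 1"
    using invF unfolding invertible_def matrix_inv_def by (rule someI_ex[THEN conjunct1])
  obtain K where K: "K > 0" "\<And>z. norm (A *v z) \<le> norm z * K"
    using bounded_linear.pos_bounded[OF matrix_vector_mul_bounded_linear[of A]] by blast
  define K1 where "K1 = K + \<omega> + 1"
  have K1pos: "K1 > 0" and K1ge: "K1 \<ge> \<omega> + 1" using K \<omega>pos unfolding K1_def by auto
  have K1b: "norm (A *v z) \<le> K1 * norm z" for z
  proof -
    have "K \<le> K1" unfolding K1_def using \<omega>pos by simp
    then have "norm z * K \<le> norm z * K1" by (simp add: mult_left_mono)
    then show ?thesis using K(2)[of z] by (simp add: mult.commute)
  qed
  define q where "q = sqrt (1 - 4*\<omega>/K1^2)"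
  have K1sq: "K1^2 \<ge> 4*\<omega>"
  proof -
    have "(\<omega>+1)^2 \<le> K1^2" using K1ge \<omega>pos by (simp add: power_mono)
    moreover have "4*\<omega> \<le> (\<omega>+1)^2"
    proof -
      have "0 \<le> (\<omega>-1)*(\<omega>-1)" by simp
      then show ?thesis by (simp add: power2_eq_square algebra_simps)
    qed
    ultimately show ?thesis by linarith
  qed
  have q0: "q \<ge> 0" unfolding q_def using K1sq K1pos by simp
  have q1: "q < 1" unfolding q_def using \<omega>pos K1pos by (simp add: real_sqrt_less_iff divide_pos_pos)
  have Bc: "norm (B *v z) \<le> q * norm (A *v z)" for z
  proof -
    have e1: "(norm (B *v z))^2 = (norm (A *v z))^2 - 4*\<omega>*(norm z)^2"
      unfolding nA nB by (simp add: power2_eq_square algebra_simps)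
    have "(norm (A *v z))^2 \<le> K1^2 * (norm z)^2" using K1b[of z]
      by (metis norm_ge_zero power_mono power_mult_distrib)
    then have "(norm (A *v z))^2 / K1^2 \<le> (norm z)^2" using K1pos by (simp add: divide_le_eq mult.commute)
    then have "4*\<omega>*((norm (A *v z))^2 / K1^2) \<le> 4*\<omega>*(norm z)^2" using \<omega>pos by (intro mult_left_mono) auto
    then have "(norm (B *v z))^2 \<le> (1 - 4*\<omega>/K1^2) * (norm (A *v z))^2"
      unfolding e1 by (simp add: algebra_simps)
    also have "\<dots> = (q * norm (A *v z))^2" unfolding q_def
      using K1sq K1pos by (simp add: power_mult_distrib)
    finally show ?thesis by (rule power2_le_imp_le) (simp add: q0)
  qed
  have Av: "A *v w = \<omega> *\<^sub>R w + calT T *v w" for w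
    unfolding A_def by (simp only: matrix_vector_mult_add_rdistrib scal_mv)
  have Bv: "B *v w = \<omega> *\<^sub>R w - calT T *v w" for w
    unfolding B_def by (simp only: matrix_vector_mult_diff_rdistrib scal_mv)
  have Cv: "C *v w = \<omega> *\<^sub>R w + Dm *v w" for w
    unfolding C_def by (simp only: matrix_vector_mult_add_rdistrib scal_mv)
  have Ev: "E *v w = \<omega> *\<^sub>R w - Dm *v w" for w
    unfolding E_def by (simp only: matrix_vector_mult_diff_rdistrib scal_mv)
  have Rv: "calR T d *v w = calT T *v w + Dm *v w" for w
    unfolding calR_eq Dm_def by (simp only: matrix_vector_mult_add_rdistrib)
  have comm: "A *v (B *v z) = B *v (A *v z)" for z
    unfolding Av Bv by (simp only: matrix_vector_mult_diff_distrib matrix_vector_right_distrib matrix_vector_mult_scaleR) (simp add: algebra_simps)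
  have key: "A *v (C *v x) - B *v (E *v x) = (2*\<omega>) *\<^sub>R (calR T d *v x)" for x
    unfolding Av Bv Cv Ev Rv by (simp only: matrix_vector_mult_diff_distrib matrix_vector_right_distrib matrix_vector_mult_scaleR) (simp add: vec_eq_iff algebra_simps)
  define c where "c = 1 + q * s / \<omega>"
  have bound: "norm ((matrix_inv F ** calR T d) *v x) \<le> c * norm x" for x
  proof -
    define y where "y = (matrix_inv F ** calR T d) *v x"
    have Fy: "F *v y = calR T d *v x" unfolding y_def
      by (metis Finv matrix_vector_mul_assoc matrix_vector_mul_lid)
    have "A *v (C *v y) = (2*\<omega>) *\<^sub>R (F *v y)" using \<omega>pos by (simp add: Fv)
    also have "\<dots> = A *v (C *v x) - B *v (E *v x)" using key[of x] Fy by simp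
    finally have "A *v (C *v (x - y)) = B *v (E *v x)"
      by (simp add: matrix_vector_mult_diff_distrib)
    define v where "v = E *v x"
    define u where "u = C *v (x - y)"
    define z where "z = Ai *v v"
    have Az: "A *v z = v" unfolding z_def by (simp add: matrix_vector_mul_assoc Ai)
    have "A *v u = B *v v" unfolding u_def v_def by fact
    also have "\<dots> = A *v (B *v z)" using comm[of z] Az by simp
    finally have u: "u = B *v z" using injA by (simp add: inj_eq)
    have nu: "norm u \<le> q * norm v" unfolding u using Bc[of z] Az by simp
    have nv: "norm v \<le> s * norm x" unfolding v_def by (rule Eup)
    have "q * norm v \<le> q * (s * norm x)" using nv q0 by (rule mult_left_mono)
    then have nu2: "norm u \<le> q * s * norm x" using nu by (simp add: mult.assoc)
    have "\<omega> * norm (x - y) \<le> norm u" unfolding u_def by (rule Clow)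
    then have "\<omega> * norm (x - y) \<le> q * s * norm x" using nu2 by linarith
    then have ex: "norm (x - y) \<le> q * s / \<omega> * norm x" using \<omega>pos by (simp add: field_simps)
    have "norm y \<le> norm x + norm (x - y)" using norm_triangle_ineq4[of x "x - y"] by simp
    also have "\<dots> \<le> c * norm x" using ex unfolding c_def by (simp add: distrib_right)
    finally show ?thesis unfolding y_def .
  qed
  have le: "norm2 (matrix_inv F ** calR T d) \<le> c" unfolding norm2_def by (rule onorm_le) (rule bound)
  have spos': "s > 0" using spos \<omega>pos by linarith
  have "q * s < 1 * s" using q1 spos' by (rule mult_strict_right_mono)
  then have h1: "q * s / \<omega> < s / \<omega>" using \<omega>pos by (simp only: mult_1) (rule divide_strict_right_mono)
  have h2: "1 \<le> s / \<omega>" using spos \<omega>pos by (simp add: le_divide_eq)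
  have h3: "2 * s / \<omega> = s / \<omega> + s / \<omega>" by (simp add: add_divide_distrib[symmetric])
  have "c < 2 * s / \<omega>" unfolding c_def h3 using h1 h2 by linarith
  with le have "norm2 (matrix_inv F ** calR T d) < 2 * s / \<omega>" by linarith
  then show ?thesis unfolding F_def s_def \<nu>_def .
qed

end
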